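(* Let $n\ge3$, $t_1<\dots<t_n$, and for $j=1,\dots,n-1$ let $\lambda_{0,j}\le0\le\lambda_{1,j}$ be real and $\varphi_j=\Phi_{(\lambda_{0,j},\lambda_{1,j})}$. Let $H_1,\dots,H_n$ be the generalized hat functions built from $\varphi_1,\dots,\varphi_{n-1}$ and $t_1<\dots<t_n$. Then $0\le\sum_{j=1}^nH_j(t)\le1$ for all $t\in[t_1,t_n]$.
   Context: $\Phi_{(\lambda_0,\lambda_1)}$ is the unique solution of $(\frac{d}{dt}-\lambda_0)(\frac{d}{dt}-\lambda_1)u=0$ with $u(0)=0$, $u'(0)=1$ (it is strictly increasing on $\mathbb{R}$ when $\lambda_0\le0\le\lambda_1$). Generalized hat functions: for $2\le j\le n-1$, $H_j(t)=\frac{\varphi_{j-1}(t-t_{j-1})}{\varphi_{j-1}(t_j-t_{j-1})}$ on $[t_{j-1},t_j]$, $H_j(t)=\frac{\varphi_j(t-t_{j+1})}{\varphi_j(t_j-t_{j+1})}$ on $[t_j,t_{j+1}]$, and $0$ elsewhere on $[t_1,t_n]$; $H_1(t)=\frac{\varphi_1(t-t_2)}{\varphi_1(t_1-t_2)}$ on $[t_1,t_2]$ and $0$ elsewhere; $H_n(t)=\frac{\varphi_{n-1}(t-t_{n-1})}{\varphi_{n-1}(t_n-t_{n-1})}$ on $[t_{n-1},t_n]$ and $0$ elsewhere. *)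

theory Defs
  imports "HOL-Analysis.Analysis"
begin

text \<open>Phi (l0,l1): the unique solution u of (d/dt - l0)(d/dt - l1) u = 0, i.e.
  u'' - (l0 + l1) u' + l0 l1 u = 0 on the reals, with u(0) = 0, u'(0) = 1.\<close>
definition Phi :: "real \<Rightarrow> real \<Rightarrow> real \<Rightarrow> real" where
  "Phi l0 l1 = (THE u. \<exists>u'. (\<forall>x. (u has_real_derivative u' x) (at x))
      \<and> (\<forall>x. (u' has_real_derivative ((l0 + l1) * u' x - l0 * l1 * u x)) (at x))
      \<and> u 0 = 0 \<and> u' 0 = 1)"

definition hat :: "nat \<Rightarrow> (nat \<Rightarrow> real \<Rightarrow> real) \<Rightarrow> (nat \<Rightarrow> real) \<Rightarrow> nat \<Rightarrow> real \<Rightarrow> real" where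
  "hat n phi t j x =
     (if 2 \<le> j \<and> j \<le> n \<and> t (j-1) \<le> x \<and> x \<le> t j then
        phi (j-1) (x - t (j-1)) / phi (j-1) (t j - t (j-1))
      else if 1 \<le> j \<and> j \<le> n - 1 \<and> t j \<le> x \<and> x \<le> t (j+1) then
        phi j (x - t (j+1)) / phi j (t j - t (j+1))
      else 0)"

end

theory Submission
  imports Defs
begin

lemma ode_unique:
  fixes w w' :: "real \<Rightarrow> real"
  assumes d1: "\<And>x. (w has_real_derivative w' x) (at x)"
    and d2: "\<And>x. (w' has_real_derivative ((a + b) * w' x - a * b * w x)) (at x)"
    and "w 0 = 0" "w' 0 = 0"
  shows "w y = 0"
proof -
  define p where "p x = w' x - a * w x" for x
  have dp: "(p has_real_derivative b * p x) (at x)" for x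
    unfolding p_def using d1[of x] d2[of x]
    by (auto intro!: derivative_eq_intros simp: algebra_simps)
  have "((\<lambda>x. p x * exp (- b * x)) has_real_derivative 0) (at x)" for x
    using dp[of x] by (auto intro!: derivative_eq_intros simp: algebra_simps)
  hence c1: "p x * exp (- b * x) = p 0 * exp (- b * 0)" for x
    by (intro DERIV_isconst_all) auto
  have p0: "p x = 0" for x using c1[of x] assms(3,4) by (simp add: p_def)
  have "((\<lambda>x. w x * exp (- a * x)) has_real_derivative 0) (at x)" for x
    using d1[of x] p0[of x] unfolding p_def
    by (auto intro!: derivative_eq_intros simp: algebra_simps)
  hence "w y * exp (- a * y) = w 0 * exp (- a * 0)"
    by (intro DERIV_isconst_all) auto
  thus ?thesis using assms(3) by simp
qed

definition F :: "real \<Rightarrow> real \<Rightarrow> real \<Rightarrow> real" where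
  "F a b s = (if a = b then s * exp (a * s) else (exp (b * s) - exp (a * s)) / (b - a))"
definition F' :: "real \<Rightarrow> real \<Rightarrow> real \<Rightarrow> real" where
  "F' a b s = (if a = b then exp (a * s) + a * s * exp (a * s)
     else (b * exp (b * s) - a * exp (a * s)) / (b - a))"

lemma F_d1: "(F a b has_real_derivative F' a b x) (at x)"
proof (cases "a = b")
  case True
  then show ?thesis unfolding F_def[abs_def] F'_def
    by (auto intro!: derivative_eq_intros simp: algebra_simps)
next
  case False
  define c where "c = 1 / (b - a)"
  have e1: "F a b = (\<lambda>s. c * (exp (b * s) - exp (a * s)))"
    using False by (auto simp: F_def c_def fun_eq_iff)
  have e2: "F' a b x = c * (b * exp (b * x) - a * exp (a * x))"
    using False by (auto simp: F'_def c_def)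
  show ?thesis unfolding e1 e2
    by (auto intro!: derivative_eq_intros simp: algebra_simps)
qed

lemma F_d2: "(F' a b has_real_derivative ((a + b) * F' a b x - a * b * F a b x)) (at x)"
proof (cases "a = b")
  case True
  then show ?thesis unfolding F_def F'_def[abs_def]
    by (auto intro!: derivative_eq_intros simp: algebra_simps power2_eq_square)
next
  case False
  define c where "c = 1 / (b - a)"
  have e1: "F a b x = c * (exp (b * x) - exp (a * x))"
    using False by (auto simp: F_def c_def)
  have e2: "F' a b = (\<lambda>x. c * (b * exp (b * x) - a * exp (a * x)))"
    using False by (auto simp: F'_def c_def fun_eq_iff)
  show ?thesis unfolding e1 e2
    by (auto intro!: derivative_eq_intros simp: algebra_simps power2_eq_square)
qed

lemma Phi_F: "Phi a b = F a b"
  unfolding Phi_def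
proof (rule the_equality)
  show "\<exists>u'. (\<forall>x. (F a b has_real_derivative u' x) (at x)) \<and>
         (\<forall>x. (u' has_real_derivative (a + b) * u' x - a * b * F a b x) (at x)) \<and>
         F a b 0 = 0 \<and> u' 0 = 1"
    by (rule exI[of _ "F' a b"]) (intro conjI allI F_d1 F_d2; simp add: F_def F'_def)
next
  fix u assume "\<exists>u'. (\<forall>x. (u has_real_derivative u' x) (at x)) \<and>
         (\<forall>x. (u' has_real_derivative (a + b) * u' x - a * b * u x) (at x)) \<and>
         u 0 = 0 \<and> u' 0 = 1"
  then obtain u' where h: "\<And>x. (u has_real_derivative u' x) (at x)"
    "\<And>x. (u' has_real_derivative (a + b) * u' x - a * b * u x) (at x)"
    "u 0 = 0" "u' 0 = 1" by blast
  have "u y - F a b y = 0" for y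
  proof (rule ode_unique[where w = "\<lambda>x. u x - F a b x" and w' = "\<lambda>x. u' x - F' a b x" and a = a and b = b])
    show "((\<lambda>x. u x - F a b x) has_real_derivative u' x - F' a b x) (at x)" for x
      using h(1) F_d1 by (intro derivative_intros) auto
    show "((\<lambda>x. u' x - F' a b x) has_real_derivative
        (a + b) * (u' x - F' a b x) - a * b * (u x - F a b x)) (at x)" for x
      using DERIV_diff[OF h(2)[of x] F_d2[of a b x]] by (simp add: algebra_simps)
  qed (use h in \<open>auto simp: F_def F'_def\<close>)
  thus "u = F a b" by auto
qed


lemma F_sign:
  assumes "a \<le> 0" "0 \<le> b"
  shows "(s > 0 \<longrightarrow> F a b s > 0) \<and> (s < 0 \<longrightarrow> F a b s < 0)"
proof (cases "a = b")
  case True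
  then have "a = 0" "b = 0" using assms by auto
  then show ?thesis by (simp add: F_def)
next
  case False
  then have ab: "a < b" using assms by auto
  have "s > 0 \<Longrightarrow> a * s < b * s" "s < 0 \<Longrightarrow> b * s < a * s"
    using ab by (auto intro: mult_strict_right_mono mult_strict_right_mono_neg)
  then show ?thesis using ab False by (auto simp: F_def divide_pos_pos divide_neg_pos)
qed

lemma exp_conv: fixes t c :: real assumes "0 \<le> t" "t \<le> 1" shows "exp (t * c) \<le> 1 - t + t * exp c"
  using convex_onD[OF exp_convex, of t 0 c] assms by simp

lemma key:
  assumes "a \<le> 0" "0 \<le> b" "0 < h" "0 \<le> s" "s \<le> h"
  shows "0 \<le> F a b (s - h) / F a b (- h) + F a b s / F a b h
       \<and> F a b (s - h) / F a b (- h) + F a b s / F a b h \<le> 1"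
proof
  have n1: "F a b (- h) < 0" "F a b h > 0" using F_sign[OF assms(1,2)] assms(3) by auto
  have "F a b (s - h) \<le> 0" using F_sign[OF assms(1,2), of "s - h"] assms
    by (cases "s = h") (auto simp: F_def)
  moreover have "F a b s \<ge> 0" using F_sign[OF assms(1,2), of "s"] assms
    by (cases "s = 0") (auto simp: F_def)
  ultimately show "0 \<le> F a b (s - h) / F a b (- h) + F a b s / F a b h"
    using n1 by (simp add: divide_nonpos_neg)
  show "F a b (s - h) / F a b (- h) + F a b s / F a b h \<le> 1"
  proof (cases "a = b")
    case True
    then have "a = 0" "b = 0" using assms by auto
    then show ?thesis using assms by (simp add: F_def field_simps)
  next
    case False
    then have ab: "a < b" using assms by auto
    define X Y P Q where "X = exp (b * s)" "Y = exp (a * s)" "P = exp (b * h)" "Q = exp (a * h)"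
    have pos: "X > 0" "Y > 0" "P > 0" "Q > 0" by (auto simp: X_Y_P_Q_def)
    have PQ: "Q < P" using ab assms(3) by (auto simp: X_Y_P_Q_def)
    have e1: "exp (b * (s - h)) = X / P" "exp (a * (s - h)) = Y / Q"
      "exp (b * (- h)) = 1 / P" "exp (a * (- h)) = 1 / Q"
      by (auto simp: X_Y_P_Q_def right_diff_distrib exp_diff exp_minus field_simps)
    have f1: "F a b (s - h) = (X / P - Y / Q) / (b - a)" "F a b (- h) = (1 / P - 1 / Q) / (b - a)"
      using False unfolding F_def e1 by simp_all
    have "F a b (s - h) / F a b (- h) = (X / P - Y / Q) / (1 / P - 1 / Q)"
      unfolding f1 using ab by simp
    also have "\<dots> = (Y * P - X * Q) / (P - Q)" using pos PQ by (simp add: field_simps)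
    finally have t1: "F a b (s - h) / F a b (- h) = (Y * P - X * Q) / (P - Q)" .
    have t2: "F a b s / F a b h = (X - Y) / (P - Q)"
      using False ab by (simp add: F_def X_Y_P_Q_def)
    define t where "t = s / h"
    have t01: "0 \<le> t" "t \<le> 1" using assms by (auto simp: t_def)
    have "X \<le> 1 - t + t * P" using exp_conv[OF t01, of "b * h"] assms(3)
      by (simp add: X_Y_P_Q_def t_def mult.commute)
    hence Xb: "X - 1 \<le> t * (P - 1)" by (simp add: algebra_simps)
    have "Y \<le> 1 - t + t * Q" using exp_conv[OF t01, of "a * h"] assms(3)
      by (simp add: X_Y_P_Q_def t_def mult.commute)
    hence Yb: "t * (1 - Q) \<le> 1 - Y" by (simp add: algebra_simps)
    have P1: "P \<ge> 1" "Q \<le> 1" using assms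
      by (auto simp: X_Y_P_Q_def mult_nonpos_nonneg)
    have "(X - 1) * (1 - Q) \<le> t * (P - 1) * (1 - Q)"
      using Xb P1 by (intro mult_right_mono) auto
    also have "\<dots> = t * (1 - Q) * (P - 1)" by simp
    also have "\<dots> \<le> (1 - Y) * (P - 1)" using Yb P1 by (intro mult_right_mono) auto
    finally have "(X - 1) * (1 - Q) \<le> (1 - Y) * (P - 1)" .
    hence "Y * P - X * Q + X - Y \<le> P - Q" by (simp add: algebra_simps)
    hence "(Y * P - X * Q + (X - Y)) / (P - Q) \<le> 1" using PQ by (simp add: divide_le_eq_1)
    thus ?thesis unfolding t1 t2 by (simp add: add_divide_distrib)
  qed
qed


theorem mainTheorem11:
  fixes n :: nat and t :: "nat \<Rightarrow> real" and lam0 lam1 :: "nat \<Rightarrow> real" and x :: real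
  assumes "n \<ge> 3"
    and "\<And>i. 1 \<le> i \<Longrightarrow> i < n \<Longrightarrow> t i < t (i+1)"
    and "\<And>j. 1 \<le> j \<Longrightarrow> j \<le> n - 1 \<Longrightarrow> lam0 j \<le> 0 \<and> 0 \<le> lam1 j"
    and "x \<in> {t 1 .. t n}"
  shows "0 \<le> (\<Sum>j=1..n. hat n (\<lambda>j. Phi (lam0 j) (lam1 j)) t j x)
       \<and> (\<Sum>j=1..n. hat n (\<lambda>j. Phi (lam0 j) (lam1 j)) t j x) \<le> 1"
proof -
  define phi where "phi = (\<lambda>j. F (lam0 j) (lam1 j))"
  have phieq: "(\<lambda>j. Phi (lam0 j) (lam1 j)) = phi" by (simp add: phi_def Phi_F)
  define f where "f j = hat n phi t j x" for j
  have phi0: "phi j 0 = 0" for j by (simp add: phi_def F_def)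
  have phinz: "phi j y \<noteq> 0" if "1 \<le> j" "j \<le> n - 1" "y \<noteq> 0" for j y
    using F_sign[of "lam0 j" "lam1 j" y] assms(3)[OF that(1,2)] that(3)
    by (auto simp: phi_def neq_iff)
  have tmono: "t i < t j" if "1 \<le> i" "i < j" "j \<le> n" for i j
    using that
  proof (induction j)
    case 0 then show ?case by simp
  next
    case (Suc j)
    show ?case
    proof (cases "i = j")
      case True then show ?thesis using assms(2)[of i] Suc.prems by simp
    next
      case False
      then have "t i < t j" using Suc by simp
      also have "t j < t (Suc j)" using assms(2)[of j] Suc.prems False by simp
      finally show ?thesis .
    qed
  qed
  have tle: "t i \<le> t j" if "1 \<le> i" "i \<le> j" "j \<le> n" for i j
    using tmono[of i j] that by (cases "i = j") auto
  define K where "K = {i. 1 \<le> i \<and> i \<le> n - 1 \<and> t i \<le> x}"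
  define k where "k = Max K"
  have finK: "finite K" by (simp add: K_def)
  have "1 \<in> K" using assms(1,4) by (simp add: K_def)
  hence kK: "k \<in> K" and kmax: "\<And>i. i \<in> K \<Longrightarrow> i \<le> k" using finK
    by (auto simp: k_def intro: Max_in Max_ge)
  have k1: "1 \<le> k" "k \<le> n - 1" "t k \<le> x" using kK by (auto simp: K_def)
  have kn: "k \<le> n" "k + 1 \<le> n" using k1 assms(1) by auto
  have k2: "x \<le> t (k + 1)"
  proof (cases "k = n - 1")
    case True then show ?thesis using assms(1,4) by simp
  next
    case False
    then have "k + 1 \<notin> K" using kmax by fastforce
    then show ?thesis using k1 False by (auto simp: K_def)
  qed
  have zero: "f j = 0" if "j \<in> {1..n} - {k, k+1}" for j
  proof -
    have j: "1 \<le> j" "j \<le> n" "j \<noteq> k" "j \<noteq> k + 1" using that by auto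
    show ?thesis
    proof (cases "j < k")
      case True
      have A: "\<not> (2 \<le> j \<and> j \<le> n \<and> t (j-1) \<le> x \<and> x \<le> t j)"
        using tmono[of j k] True j k1 kn by force
      have B: "t j \<le> x \<and> x \<le> t (j+1) \<Longrightarrow> x = t (j + 1)"
        using tle[of "j+1" k] True j k1 kn by force
      have C: "t j \<le> x \<and> x \<le> t (j+1) \<Longrightarrow> j + 1 = k"
        using tmono[of "j+1" k] True j k1 kn by (cases "j + 1 = k") auto
      show ?thesis unfolding f_def hat_def using A B C phi0 by auto
    next
      case False
      then have jk: "k + 2 \<le> j" using j by auto
      have A: "2 \<le> j \<and> j \<le> n \<and> t (j-1) \<le> x \<and> x \<le> t j \<Longrightarrow> x = t (j - 1)"
        proof -
        assume h: "2 \<le> j \<and> j \<le> n \<and> t (j-1) \<le> x \<and> x \<le> t j"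
        have "t (k+1) \<le> t (j-1)" using tle[of "k+1" "j-1"] jk j by auto
        thus ?thesis using h k2 by linarith
      qed
      have B: "\<not> (t j \<le> x)"
        using tmono[of "k+1" j] jk j k1 k2 kn by auto
      show ?thesis unfolding f_def hat_def using A B phi0 by auto
    qed
  qed
  have "sum f {1..n} = sum f {k, k+1}"
    by (rule sum.mono_neutral_right) (use zero k1 in auto)
  also have "\<dots> = f k + f (k + 1)" by simp
  finally have S: "sum f {1..n} = f k + f (k + 1)" .
  have tk: "t k < t (k + 1)" using assms(2)[of k] k1 by simp
  have fk: "f k = phi k (x - t (k+1)) / phi k (t k - t (k+1))"
  proof (cases "2 \<le> k \<and> k \<le> n \<and> t (k-1) \<le> x \<and> x \<le> t k")
    case True
    then have xe: "x = t k" using k1 by auto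
    have "t (k-1) < t k" using tmono[of "k-1" k] True k1 by auto
    hence "phi (k-1) (t k - t (k-1)) \<noteq> 0"
      using phinz[of "k-1" "t k - t (k-1)"] True k1 by (simp add: le_diff_conv2)
    moreover have "phi k (t k - t (k+1)) \<noteq> 0" using phinz[of k] k1 tk by auto
    ultimately show ?thesis using True unfolding f_def hat_def xe by simp
  next
    case False
    then show ?thesis using k1 k2 unfolding f_def hat_def by auto
  qed
  have fk1: "f (k+1) = phi k (x - t k) / phi k (t (k+1) - t k)"
    using k1 k2 assms(1) unfolding f_def hat_def by auto
  have "0 \<le> f k + f (k+1) \<and> f k + f (k+1) \<le> 1"
    using key[of "lam0 k" "lam1 k" "t (k+1) - t k" "x - t k"] assms(3)[OF k1(1,2)] k1 k2 tk
    unfolding fk fk1 phi_def by (simp add: algebra_simps)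
  thus ?thesis unfolding phieq using S by (simp add: f_def)
qed

end
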